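(* Let $H$ be an SR-monoid. Then: (a) $1s\Rightarrow 0s$, $2s\Rightarrow 0s$, $3s\Rightarrow 0s$, $2s\Rightarrow 1s$, $2s\Rightarrow 3s$, $2s\Rightarrow 5s$, $3s\Rightarrow 6s$, $5s\Rightarrow 4s$, $4s\Rightarrow 4's$, $5s\Rightarrow 5's$; (b) $kr\Leftrightarrow ks$ for each $k\in\{0,1,2,3,4,4',5,5',6\}$.
   Context: A monoid means a commutative cancellative monoid (written multiplicatively); $H^{\ast}$ is its unit group, $\mathbb{N}=\{1,2,\dots\}$, $\mathbb{N}_0=\{0,1,2,\dots\}$. Elements are relatively prime ($a\perp b$) if all their common divisors are units. $\mathrm{Sqf}\,H$: elements not of the form $b^2c$ with $b\notin H^{\ast}$. $\mathrm{Gpr}\,H$: elements $r$ such that $r\mid b^n$ ($n\in\mathbb{N}$) implies $r\mid b$. $H$ is an SR-monoid if $\mathrm{Gpr}\,H=\mathrm{Sqf}\,H$. Let $S$ stand for $\mathrm{Sqf}\,H$ (suffix s) or $\mathrm{Gpr}\,H$ (suffix r). For every $a\in H$: (0) there are $n\in\mathbb{N}$, $s_1,\dots,s_n\in S$ with $a=s_1\cdots s_n$; (1) there are $n\in\mathbb{N}$, $s_1,\dots,s_n\in S$ with $s_i\perp s_j$ for $i\ne j$ and $a=s_1s_2^2\cdots s_n^n$; (2) there are $n\in\mathbb{N}$, $s_1,\dots,s_n\in S$ with $s_i\mid s_{i+1}$ ($i<n$) and $a=s_1\cdots s_n$; (3) there are $n\in\mathbb{N}_0$, $s_0,\dots,s_n\in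 S$ with $a=s_0s_1^2s_2^{2^2}\cdots s_n^{2^n}$; (4) there are $b\in H$, $c\in S$ with $b\perp c$, $a=bc$, and some $d\in S$ with $d^2\mid b$ and $b\mid d^n$ for some $n\in\mathbb{N}$; (4') there are $b\in H$, $c\in S$ with $b\perp c$, $a=bc$, and for every $d\in S$, $d\mid b$ implies $d^2\mid b$; (5) there are $b\in H$, $c\in S$ with $a=bc$ and $a\mid c^n$ for some $n\in\mathbb{N}$; (5') there are $b\in H$, $c\in S$ with $a=bc$ and for every $d\in S$, $d\mid a$ implies $d\mid c$; (6) there are $b\in H$, $c\in S$ with $a=b^2c$. Condition $ks$ (resp. $kr$) is $(k)$ with $S=\mathrm{Sqf}\,H$ (resp. $S=\mathrm{Gpr}\,H$). *)

theory Defs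
  imports Main
begin

text \<open>A monoid is modelled as a type of class comm_monoid_mult (written multiplicatively);
cancellativity is assumed explicitly in the theorem. Units are the divisors of 1.\<close>

definition cancellative :: "'a::comm_monoid_mult itself \<Rightarrow> bool" where
  "cancellative _ \<longleftrightarrow> (\<forall>a b c :: 'a. a * b = a * c \<longrightarrow> b = c)"

definition relprime :: "'a::comm_monoid_mult \<Rightarrow> 'a \<Rightarrow> bool" where
  "relprime a b \<longleftrightarrow> (\<forall>c. c dvd a \<longrightarrow> c dvd b \<longrightarrow> c dvd 1)"

definition Sqf :: "'a::comm_monoid_mult set" where
  "Sqf = {a. \<not> (\<exists>b c. a = b^2 * c \<and> \<not> b dvd 1)}"

definition Gpr :: "'a::comm_monoid_mult set" where
  "Gpr = {r. \<forall>b (n::nat). n \<ge> 1 \<longrightarrow> r dvd b ^ n \<longrightarrow> r dvd b}"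

definition SR_monoid :: "'a::comm_monoid_mult itself \<Rightarrow> bool" where
  "SR_monoid _ \<longleftrightarrow> (Gpr :: 'a set) = Sqf"

definition cond0 :: "'a::comm_monoid_mult set \<Rightarrow> bool" where
  "cond0 S \<longleftrightarrow> (\<forall>a. \<exists>(n::nat) s. n \<ge> 1 \<and> (\<forall>i\<in>{1..n}. s i \<in> S) \<and> a = (\<Prod>i=1..n. s i))"

definition cond1 :: "'a::comm_monoid_mult set \<Rightarrow> bool" where
  "cond1 S \<longleftrightarrow> (\<forall>a. \<exists>(n::nat) s. n \<ge> 1 \<and> (\<forall>i\<in>{1..n}. s i \<in> S)
     \<and> (\<forall>i\<in>{1..n}. \<forall>j\<in>{1..n}. i \<noteq> j \<longrightarrow> relprime (s i) (s j))
     \<and> a = (\<Prod>i=1..n. s i ^ i))"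

definition cond2 :: "'a::comm_monoid_mult set \<Rightarrow> bool" where
  "cond2 S \<longleftrightarrow> (\<forall>a. \<exists>(n::nat) s. n \<ge> 1 \<and> (\<forall>i\<in>{1..n}. s i \<in> S)
     \<and> (\<forall>i. 1 \<le> i \<and> i < n \<longrightarrow> s i dvd s (i + 1))
     \<and> a = (\<Prod>i=1..n. s i))"

definition cond3 :: "'a::comm_monoid_mult set \<Rightarrow> bool" where
  "cond3 S \<longleftrightarrow> (\<forall>a. \<exists>(n::nat) s. (\<forall>i\<in>{0..n}. s i \<in> S) \<and> a = (\<Prod>i=0..n. s i ^ (2 ^ i)))"

definition cond4 :: "'a::comm_monoid_mult set \<Rightarrow> bool" where
  "cond4 S \<longleftrightarrow> (\<forall>a. \<exists>b c. c \<in> S \<and> relprime b c \<and> a = b * c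
     \<and> (\<exists>d\<in>S. d^2 dvd b \<and> (\<exists>n::nat. n \<ge> 1 \<and> b dvd d ^ n)))"

definition cond4' :: "'a::comm_monoid_mult set \<Rightarrow> bool" where
  "cond4' S \<longleftrightarrow> (\<forall>a. \<exists>b c. c \<in> S \<and> relprime b c \<and> a = b * c
     \<and> (\<forall>d\<in>S. d dvd b \<longrightarrow> d^2 dvd b))"

definition cond5 :: "'a::comm_monoid_mult set \<Rightarrow> bool" where
  "cond5 S \<longleftrightarrow> (\<forall>a. \<exists>b c. c \<in> S \<and> a = b * c \<and> (\<exists>n::nat. n \<ge> 1 \<and> a dvd c ^ n))"

definition cond5' :: "'a::comm_monoid_mult set \<Rightarrow> bool" where
  "cond5' S \<longleftrightarrow> (\<forall>a. \<exists>b c. c \<in> S \<and> a = b * c \<and> (\<forall>d\<in>S. d dvd a \<longrightarrow> d dvd c))"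

definition cond6 :: "'a::comm_monoid_mult set \<Rightarrow> bool" where
  "cond6 S \<longleftrightarrow> (\<forall>a. \<exists>b c. c \<in> S \<and> a = b^2 * c)"

end

theory Submission
  imports Defs
begin

lemma sqf_dvd: "(x::'a::comm_monoid_mult) \<in> Sqf \<Longrightarrow> y dvd x \<Longrightarrow> y \<in> Sqf"
proof -
  assume x: "x \<in> Sqf" and "y dvd x"
  then obtain k where k: "x = y * k" by (elim dvdE)
  show "y \<in> Sqf" unfolding Sqf_def
  proof (clarify)
    fix b c assume "y = b\<^sup>2 * c" "\<not> b dvd 1"
    then have "x = b\<^sup>2 * (c * k)" using k by (simp add: mult.assoc)
    with x \<open>\<not> b dvd 1\<close> show False unfolding Sqf_def by blast
  qed
qed

lemma one_sqf: "(1::'a::comm_monoid_mult) \<in> Sqf"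
  unfolding Sqf_def
proof (clarify)
  fix b c :: 'a assume h: "1 = b\<^sup>2 * c" "\<not> b dvd 1"
  then have "1 = b * (b * c)" by (simp add: power2_eq_square mult.assoc)
  then have "b dvd 1" by (metis dvdI)
  with h show False by blast
qed

lemma sqf_sq_dvd: "(x::'a::comm_monoid_mult) \<in> Sqf \<Longrightarrow> c^2 dvd x \<Longrightarrow> c dvd 1"
  unfolding Sqf_def by (auto elim!: dvdE)

lemma sqf_gpr: "SR_monoid TYPE('a::comm_monoid_mult) \<Longrightarrow> (x::'a) \<in> Sqf \<Longrightarrow> x \<in> Gpr"
  unfolding SR_monoid_def by simp

lemma prod_pow_distrib: "prod f A ^ n = prod (\<lambda>x. (f x) ^ n) A"
  for f :: "'b \<Rightarrow> 'a::comm_monoid_mult"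
  by (induct A rule: infinite_finite_induct) (auto simp add: power_mult_distrib)

definition PrS :: "'a::comm_monoid_mult set \<Rightarrow> 'a \<Rightarrow> bool" where
  "PrS T a \<longleftrightarrow> (\<exists>(n::nat) s. (\<forall>i<n. s i \<in> T) \<and> a = (\<Prod>i<n. s i))"

lemma Pr1: "PrS T 1"
  unfolding PrS_def by (rule exI[of _ 0]) simp

lemma Pr_step: assumes "PrS T y" "t \<in> T" shows "PrS T (y * t)"
proof -
  from assms obtain n :: nat and s where s: "\<forall>i<n. s i \<in> T" "y = (\<Prod>i<n. s i)" unfolding PrS_def by blast
  define s' where "s' = s(n := t)"
  have "(\<Prod>i<Suc n. s' i) = (\<Prod>i<n. s' i) * t" by (simp add: s'_def)
  also have "(\<Prod>i<n. s' i) = (\<Prod>i<n. s i)" by (rule prod.cong) (auto simp: s'_def)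
  finally have "y * t = (\<Prod>i<Suc n. s' i)" using s by simp
  moreover have "\<forall>i<Suc n. s' i \<in> T" using s assms by (auto simp: s'_def less_Suc_eq)
  ultimately show ?thesis unfolding PrS_def by blast
qed

lemma Pr_mul: assumes "PrS T x" "PrS T y" shows "PrS T (x * y)"
proof -
  from assms(2) obtain n :: nat and s where s: "\<forall>i<n. s i \<in> T" "y = (\<Prod>i<n. s i)" unfolding PrS_def by blast
  have "\<forall>i<n. s i \<in> T \<Longrightarrow> PrS T (x * (\<Prod>i<n. s i))" for n
  proof (induction n)
    case 0 then show ?case using assms(1) by simp
  next
    case (Suc n)
    then have "PrS T (x * (\<Prod>i<n. s i))" by auto
    from Pr_step[OF this, of "s n"] Suc.prems have "PrS T (x * (\<Prod>i<n. s i) * s n)" by auto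
    then show ?case by (simp add: mult.assoc)
  qed
  with s show ?thesis by simp
qed

lemma Pr_pow: "t \<in> T \<Longrightarrow> PrS T (t ^ k)"
  by (induction k) (auto simp: Pr1 intro: Pr_mul Pr_step[OF Pr1, simplified])

lemma Pr_prod: "finite A \<Longrightarrow> (\<forall>i\<in>A. PrS T (g i)) \<Longrightarrow> PrS T (prod g A)"
  by (induction A rule: finite_induct) (auto simp: Pr1 intro: Pr_mul)

lemma Pr_cond0: assumes "1 \<in> T" "\<And>a. PrS T a" shows "cond0 T"
  unfolding cond0_def
proof
  fix a
  from assms(2)[of a] obtain n :: nat and s where s: "\<forall>i<n. s i \<in> T" "a = (\<Prod>i<n. s i)" unfolding PrS_def by blast
  show "\<exists>(n::nat) s. n \<ge> 1 \<and> (\<forall>i\<in>{1..n}. s i \<in> T) \<and> a = (\<Prod>i=1..n. s i)"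
  proof (cases "n = 0")
    case True
    then show ?thesis using s assms(1) by (intro exI[of _ "1::nat"] exI[of _ "\<lambda>_::nat. a"]) auto
  next
    case False
    have "(\<Prod>i=Suc 0..n. s (i - 1)) = (\<Prod>k<n. s k)" by (simp add: prod.atLeast1_atMost_eq)
    then show ?thesis using s False
      by (intro exI[of _ n] exI[of _ "\<lambda>i. s (i - 1)"]) auto
  qed
qed

lemma chain_lemma:
  fixes s :: "nat \<Rightarrow> 'a::comm_monoid_mult"
  shows "n \<ge> 1 \<Longrightarrow> (\<forall>i. 1 \<le> i \<and> i < n \<longrightarrow> s i dvd s (i + 1)) \<Longrightarrow>
    \<exists>t. prod t {1..n} = s n \<and> prod s {1..n} = (\<Prod>i=1..n. t i ^ i)"
proof (induction n rule: nat_induct_at_least)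
  case base
  then show ?case by (intro exI[of _ s]) simp
next
  case (Suc n)
  then obtain t where t: "prod t {1..n} = s n" "prod s {1..n} = (\<Prod>i=1..n. t i ^ i)" by auto
  have "s n dvd s (Suc n)" using Suc by auto
  then obtain v where v: "s (Suc n) = s n * v" by (elim dvdE)
  define t' where "t' i = (if i = 1 then v else t (i - 1))" for i
  have sh: "prod f {1..Suc n} = f 1 * prod (\<lambda>i. f (Suc i)) {1..n}" for f :: "nat \<Rightarrow> 'a"
    by (simp add: prod.atLeast_Suc_atMost prod.shift_bounds_cl_Suc_ivl del: prod.cl_ivl_Suc)
  have e1: "prod t' {1..Suc n} = v * prod t {1..n}"
    unfolding sh by (simp add: t'_def)
  have "(\<Prod>i=1..Suc n. t' i ^ i) = v * (\<Prod>i=1..n. t i ^ Suc i)"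
    unfolding sh[of "\<lambda>i. t' i ^ i"] by (simp add: t'_def)
  also have "(\<Prod>i=1..n. t i ^ Suc i) = (\<Prod>i=1..n. t i ^ i) * prod t {1..n}"
    by (simp add: prod.distrib[symmetric] mult.commute)
  finally have e2: "(\<Prod>i=1..Suc n. t' i ^ i) = v * prod s {1..n} * s n"
    using t by (simp add: mult_ac)
  have "prod s {1..Suc n} = prod s {1..n} * s (Suc n)" using Suc by simp
  then show ?case using e1 e2 t v by (intro exI[of _ t']) (simp add: mult_ac)
qed

lemma L2:
  assumes "cond2 (Sqf::'a::comm_monoid_mult set)"
  shows "\<exists>n t. n \<ge> 1 \<and> prod t {1..n} \<in> (Sqf::'a set) \<and> a = (\<Prod>i=1..n. t i ^ i)"
proof -
  from assms obtain n :: nat and s where s: "n \<ge> 1" "\<forall>i\<in>{1..n}. s i \<in> (Sqf::'a set)"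
    "\<forall>i. 1 \<le> i \<and> i < n \<longrightarrow> s i dvd s (i + 1)" "a = (\<Prod>i=1..n. s i)"
    unfolding cond2_def by blast
  from chain_lemma[OF s(1) s(3)] obtain t where
    "prod t {1..n} = s n" "prod s {1..n} = (\<Prod>i=1..n. t i ^ i)" by blast
  with s show ?thesis by (intro exI[of _ n] exI[of _ t]) auto
qed

lemma prod_pair_dvd:
  assumes "finite A" "i \<in> A" "j \<in> A" "i \<noteq> j"
  shows "f i * f j dvd prod f A"
proof -
  have "prod f A = f i * prod f (A - {i})" using assms by (simp add: prod.remove)
  also have "prod f (A - {i}) = f j * prod f (A - {i} - {j})" using assms by (simp add: prod.remove)
  finally show ?thesis by (metis dvd_triv_left mult.assoc)
qed

lemma bits_sum: "(i::nat) < 2 ^ Suc K \<Longrightarrow> (\<Sum>k\<le>K. (i div 2^k) mod 2 * 2^k) = i"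
proof (induction K arbitrary: i)
  case 0 then show ?case by simp
next
  case (Suc K)
  have "i div 2 < 2 ^ Suc K" using Suc.prems by simp
  note IH = Suc.IH[OF this]
  have "(\<Sum>k\<le>Suc K. (i div 2^k) mod 2 * 2^k) = i mod 2 + (\<Sum>k\<le>K. (i div 2^Suc k) mod 2 * 2^Suc k)"
    by (simp add: sum.atMost_Suc_shift del: sum.atMost_Suc)
  also have "(\<Sum>k\<le>K. (i div 2^Suc k) mod 2 * 2^Suc k) = 2 * (\<Sum>k\<le>K. (i div 2 div 2^k) mod 2 * 2^k)"
    by (simp add: sum_distrib_left div_mult2_eq mult_ac)
  finally show ?case using IH by simp
qed

theorem proposition4p2:
  assumes "cancellative TYPE('a::comm_monoid_mult)"
    and "SR_monoid TYPE('a)"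
  shows "(cond1 (Sqf::'a set) \<longrightarrow> cond0 (Sqf::'a set))
    \<and> (cond2 (Sqf::'a set) \<longrightarrow> cond0 (Sqf::'a set))
    \<and> (cond3 (Sqf::'a set) \<longrightarrow> cond0 (Sqf::'a set))
    \<and> (cond2 (Sqf::'a set) \<longrightarrow> cond1 (Sqf::'a set))
    \<and> (cond2 (Sqf::'a set) \<longrightarrow> cond3 (Sqf::'a set))
    \<and> (cond2 (Sqf::'a set) \<longrightarrow> cond5 (Sqf::'a set))
    \<and> (cond3 (Sqf::'a set) \<longrightarrow> cond6 (Sqf::'a set))
    \<and> (cond5 (Sqf::'a set) \<longrightarrow> cond4 (Sqf::'a set))
    \<and> (cond4 (Sqf::'a set) \<longrightarrow> cond4' (Sqf::'a set))
    \<and> (cond5 (Sqf::'a set) \<longrightarrow> cond5' (Sqf::'a set))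
    \<and> ((cond0 (Gpr::'a set) \<longleftrightarrow> cond0 (Sqf::'a set))
      \<and> (cond1 (Gpr::'a set) \<longleftrightarrow> cond1 (Sqf::'a set))
      \<and> (cond2 (Gpr::'a set) \<longleftrightarrow> cond2 (Sqf::'a set))
      \<and> (cond3 (Gpr::'a set) \<longleftrightarrow> cond3 (Sqf::'a set))
      \<and> (cond4 (Gpr::'a set) \<longleftrightarrow> cond4 (Sqf::'a set))
      \<and> (cond4' (Gpr::'a set) \<longleftrightarrow> cond4' (Sqf::'a set))
      \<and> (cond5 (Gpr::'a set) \<longleftrightarrow> cond5 (Sqf::'a set))
      \<and> (cond5' (Gpr::'a set) \<longleftrightarrow> cond5' (Sqf::'a set))
      \<and> (cond6 (Gpr::'a set) \<longleftrightarrow> cond6 (Sqf::'a set)))"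
proof -
  have GS: "(Gpr::'a set) = Sqf" using assms(2) unfolding SR_monoid_def by simp
  have gpr: "x \<in> Gpr" if "(x::'a) \<in> Sqf" for x using GS that by simp
  have c10: "cond0 (Sqf::'a set)" if "cond1 (Sqf::'a set)"
  proof (rule Pr_cond0[OF one_sqf])
    fix a :: 'a
    from that obtain n s where s: "\<forall>i\<in>{1..n}. s i \<in> (Sqf::'a set)" "a = (\<Prod>i=1..n. s i ^ i)"
      unfolding cond1_def by blast
    then show "PrS Sqf a" by (auto intro!: Pr_prod Pr_pow)
  qed
  have c20: "cond0 (Sqf::'a set)" if "cond2 (Sqf::'a set)"
    using that unfolding cond2_def cond0_def by blast
  have c30: "cond0 (Sqf::'a set)" if "cond3 (Sqf::'a set)"
  proof (rule Pr_cond0[OF one_sqf])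
    fix a :: 'a
    from that obtain n s where s: "\<forall>i\<in>{0..n}. s i \<in> (Sqf::'a set)" "a = (\<Prod>i=0..n. s i ^ (2 ^ i))"
      unfolding cond3_def by blast
    then show "PrS Sqf a" by (auto intro!: Pr_prod Pr_pow)
  qed
  have c21: "cond1 (Sqf::'a set)" if "cond2 (Sqf::'a set)"
    unfolding cond1_def
  proof
    fix a :: 'a
    from L2[OF that, of a] obtain n t where nt: "n \<ge> 1" "prod t {1..n} \<in> (Sqf::'a set)"
      "a = (\<Prod>i=1..n. t i ^ i)" by blast
    have "\<forall>i\<in>{1..n}. t i \<in> (Sqf::'a set)"
    proof
      fix i assume "i \<in> {1..n}"
      then show "t i \<in> Sqf" using prod_dvd_prod_subset[of "{1..n}" "{i}" t] by (intro sqf_dvd[OF nt(2)]) auto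
    qed
    moreover have "relprime (t i) (t j)" if "i \<in> {1..n}" "j \<in> {1..n}" "i \<noteq> j" for i j
      unfolding relprime_def
    proof (intro allI impI)
      fix c assume "c dvd t i" "c dvd t j"
      then have "c * c dvd t i * t j" by (rule mult_dvd_mono)
      also have "t i * t j dvd prod t {1..n}" using that by (intro prod_pair_dvd) auto
      finally show "c dvd 1" using nt(2) by (intro sqf_sq_dvd) (auto simp: power2_eq_square)
    qed
    ultimately show "\<exists>n s. n \<ge> 1 \<and> (\<forall>i\<in>{1..n}. s i \<in> Sqf) \<and>
      (\<forall>i\<in>{1..n}. \<forall>j\<in>{1..n}. i \<noteq> j \<longrightarrow> relprime (s i) (s j)) \<and> a = (\<Prod>i=1..n. s i ^ i)"
      using nt by blast
  qed
  have c23: "cond3 (Sqf::'a set)" if "cond2 (Sqf::'a set)"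
    unfolding cond3_def
  proof
    fix a :: 'a
    from L2[OF that, of a] obtain n t where nt: "n \<ge> 1" "prod t {1..n} \<in> (Sqf::'a set)"
      "a = (\<Prod>i=1..n. t i ^ i)" by blast
    define r where "r k = (\<Prod>i=1..n. t i ^ ((i div 2^k) mod 2))" for k
    have "r k \<in> Sqf" for k
    proof -
      have "r k dvd prod t {1..n}" unfolding r_def
        by (rule prod_dvd_prod) (auto simp: mod2_eq_if)
      then show ?thesis using nt(2) by (rule sqf_dvd[rotated])
    qed
    moreover have "(\<Prod>k=0..n. r k ^ (2 ^ k)) = a"
    proof -
      have "(\<Prod>k=0..n. r k ^ (2 ^ k)) = (\<Prod>k=0..n. \<Prod>i=1..n. t i ^ ((i div 2^k) mod 2 * 2^k))"
        unfolding r_def by (simp add: prod_pow_distrib power_mult)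
      also have "\<dots> = (\<Prod>i=1..n. \<Prod>k=0..n. t i ^ ((i div 2^k) mod 2 * 2^k))"
        by (rule prod.swap)
      also have "\<dots> = (\<Prod>i=1..n. t i ^ (\<Sum>k=0..n. (i div 2^k) mod 2 * 2^k))"
        by (simp add: power_sum)
      also have "\<dots> = (\<Prod>i=1..n. t i ^ i)"
      proof (rule prod.cong[OF refl])
        fix i assume "i \<in> {1..n}"
        then have "i < 2 ^ Suc n" using less_exp[of n] by (simp del: power_Suc) (metis less_trans less_exp lessI order.strict_trans1 power_strict_increasing_iff one_less_numeral_iff semiring_norm(76))
        then show "t i ^ (\<Sum>k=0..n. (i div 2^k) mod 2 * 2^k) = t i ^ i"
          using bits_sum[of i n] by (simp add: atLeast0AtMost)
      qed
      finally show ?thesis using nt by simp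
    qed
    ultimately show "\<exists>n s. (\<forall>i\<in>{0..n}. s i \<in> Sqf) \<and> a = (\<Prod>i=0..n. s i ^ (2 ^ i))"
      by (intro exI[of _ n] exI[of _ r]) auto
  qed
  have c25: "cond5 (Sqf::'a set)" if "cond2 (Sqf::'a set)"
    unfolding cond5_def
  proof
    fix a :: 'a
    from L2[OF that, of a] obtain n t where nt: "n \<ge> 1" "prod t {1..n} \<in> (Sqf::'a set)"
      "a = (\<Prod>i=1..n. t i ^ i)" by blast
    have ab: "a = (\<Prod>i=1..n. t i ^ (i - 1)) * prod t {1..n}"
      unfolding nt(3) prod.distrib[symmetric]
      by (rule prod.cong[OF refl]) (auto simp: power_Suc2[symmetric])
    have "a dvd prod t {1..n} ^ n"
      unfolding nt(3) prod_pow_distrib by (rule prod_dvd_prod) (auto, metis le_add_diff_inverse power_add dvd_triv_left)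
    then show "\<exists>b c. c \<in> Sqf \<and> a = b * c \<and> (\<exists>n::nat. n \<ge> 1 \<and> a dvd c ^ n)"
      using ab nt by blast
  qed
  have c36: "cond6 (Sqf::'a set)" if "cond3 (Sqf::'a set)"
    unfolding cond6_def
  proof
    fix a :: 'a
    from that obtain n s where s: "\<forall>i\<in>{0..n}. s i \<in> (Sqf::'a set)" "a = (\<Prod>i=0..n. s i ^ (2 ^ i))"
      unfolding cond3_def by blast
    have "a = (\<Prod>i<n. s (Suc i) ^ (2 ^ i))\<^sup>2 * s 0"
      unfolding s(2) atLeast0AtMost prod.atMost_shift
      by (simp add: prod_pow_distrib power_mult[symmetric] mult.commute del: prod.lessThan_Suc)
    moreover have "s 0 \<in> Sqf" using s(1) by auto
    ultimately show "\<exists>b c. c \<in> Sqf \<and> a = b\<^sup>2 * c" by blast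
  qed
  have c54: "cond4 (Sqf::'a set)" if "cond5 (Sqf::'a set)"
    unfolding cond4_def
  proof
    fix a :: 'a
    from that obtain b c n where bc: "c \<in> Sqf" "a = b * c" "n \<ge> 1" "a dvd c ^ n"
      unfolding cond5_def by blast
    from that obtain b1 c1 m where bc1: "c1 \<in> Sqf" "b = b1 * c1" "m \<ge> 1" "b dvd c1 ^ m"
      unfolding cond5_def by blast
    have "c1 dvd b" using bc1(2) by simp
    also have "b dvd a" using bc(2) by simp
    also have "a dvd c ^ n" by (rule bc(4))
    finally have "c1 dvd c ^ n" .
    then have "c1 dvd c" using gpr[OF bc1(1)] bc(3) unfolding Gpr_def by blast
    then obtain e where e: "c = c1 * e" by (elim dvdE)
    have eS: "e \<in> Sqf" using e by (intro sqf_dvd[OF bc(1)]) simp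
    have rp: "relprime (b * c1) e" unfolding relprime_def
    proof (intro allI impI)
      fix x assume x: "x dvd b * c1" "x dvd e"
      have xS: "x \<in> Gpr" using gpr sqf_dvd[OF eS x(2)] by blast
      have "b * c1 dvd c1 ^ Suc m" using mult_dvd_mono[OF bc1(4) dvd_refl[of c1]] by (simp only: power_Suc2)
      then have "x dvd c1 ^ Suc m" using x(1) by (rule dvd_trans[rotated])
      moreover have "1 \<le> Suc m" by simp
      ultimately have "x dvd c1" using xS unfolding Gpr_def by blast
      then have "x * x dvd c1 * e" using x(2) by (rule mult_dvd_mono)
      then show "x dvd 1" using bc(1) e by (intro sqf_sq_dvd[of c]) (auto simp: power2_eq_square)
    qed
    have d2: "c1^2 dvd b * c1" using bc1(2) mult_dvd_mono[OF dvd_triv_right[of c1 b1] dvd_refl[of c1]] by (simp add: power2_eq_square)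
    have dn: "b * c1 dvd c1 ^ Suc m" using mult_dvd_mono[OF bc1(4) dvd_refl[of c1]] by (simp only: power_Suc2)
    have "\<exists>n::nat. n \<ge> 1 \<and> b * c1 dvd c1 ^ n" using dn by (intro exI[of _ "Suc m"]) simp
    note en = this
    have dd: "\<exists>d\<in>Sqf. d^2 dvd b * c1 \<and> (\<exists>n::nat. n \<ge> 1 \<and> b * c1 dvd d ^ n)"
    proof (rule bexI[of _ c1])
      show "c1 \<in> Sqf" by (rule bc1(1))
      show "c1^2 dvd b * c1 \<and> (\<exists>n::nat. n \<ge> 1 \<and> b * c1 dvd c1 ^ n)" using d2 en by (intro conjI) assumption+
    qed
    have "a = (b * c1) * e" using bc e by (simp add: mult_ac)
    show "\<exists>b c. c \<in> Sqf \<and> relprime b c \<and> a = b * c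
     \<and> (\<exists>d\<in>Sqf. d^2 dvd b \<and> (\<exists>n::nat. n \<ge> 1 \<and> b dvd d ^ n))"
    proof (rule exI[of _ "b * c1"], rule exI[of _ e])
      show "e \<in> Sqf \<and> relprime (b * c1) e \<and> a = b * c1 * e
     \<and> (\<exists>d\<in>Sqf. d^2 dvd b * c1 \<and> (\<exists>n::nat. n \<ge> 1 \<and> b * c1 dvd d ^ n))"
        using eS rp \<open>a = (b * c1) * e\<close> dd by (intro conjI) assumption+
    qed
  qed
  have c44: "cond4' (Sqf::'a set)" if H4: "cond4 (Sqf::'a set)"
    unfolding cond4'_def
  proof
    fix a :: 'a
    obtain b c where h0: "c \<in> Sqf" "relprime b c" "a = b * c"
      and hd: "\<exists>d\<in>Sqf. d^2 dvd b \<and> (\<exists>n::nat. n \<ge> 1 \<and> b dvd d ^ n)"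
      using H4[unfolded cond4_def, rule_format, of a] by (elim exE conjE) (rule that)
    from hd obtain d where hd1: "d \<in> Sqf" "d^2 dvd b" and hn: "\<exists>n::nat. n \<ge> 1 \<and> b dvd d ^ n"
      by (elim bexE conjE)
    from hn obtain n :: nat where hn1: "n \<ge> 1" "b dvd d ^ n" by (elim exE conjE)
    note h = h0 hd1 hn1
    have "\<forall>d'\<in>Sqf. d' dvd b \<longrightarrow> d'^2 dvd b"
    proof (intro ballI impI)
      fix d' :: 'a assume "d' \<in> Sqf" "d' dvd b"
      then have "d' dvd d ^ n" "d' \<in> Gpr" using dvd_trans[OF \<open>d' dvd b\<close> h(7)] gpr[OF \<open>d' \<in> Sqf\<close>] by blast+
      then have "d' dvd d" using h(6) unfolding Gpr_def by blast
      then have "d'^2 dvd d^2" by (simp add: power2_eq_square mult_dvd_mono)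
      then show "d'^2 dvd b" using h(5) by (rule dvd_trans)
    qed
    then show "\<exists>b c. c \<in> Sqf \<and> relprime b c \<and> a = b * c \<and> (\<forall>d\<in>Sqf. d dvd b \<longrightarrow> d^2 dvd b)"
      using h by blast
  qed
  have c55: "cond5' (Sqf::'a set)" if "cond5 (Sqf::'a set)"
    unfolding cond5'_def
  proof
    fix a :: 'a
    from that obtain b c n where h: "c \<in> Sqf" "a = b * c" "n \<ge> 1" "a dvd c ^ n"
      unfolding cond5_def by blast
    have "\<forall>d\<in>Sqf. d dvd a \<longrightarrow> d dvd c"
    proof (intro ballI impI)
      fix d :: 'a assume "d \<in> Sqf" "d dvd a"
      then have "d dvd c ^ n" "d \<in> Gpr" using dvd_trans[OF \<open>d dvd a\<close> h(4)] gpr[OF \<open>d \<in> Sqf\<close>] by blast+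
      then show "d dvd c" using h(3) unfolding Gpr_def by blast
    qed
    then show "\<exists>b c. c \<in> Sqf \<and> a = b * c \<and> (\<forall>d\<in>Sqf. d dvd a \<longrightarrow> d dvd c)" using h by blast
  qed
  show ?thesis unfolding GS
    by (intro conjI impI iffI; assumption?) (simp_all add: c10 c20 c30 c21 c23 c25 c36 c54 c44 c55)
qed

end
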